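(* Let $C\in M_n(\mathbb{C})$ be a nilpotent contraction with $n\le4$, and let $T_1,T_2$ be as defined below. If $T_2(t,\lambda)\equiv0$, then $T_1(t,\mu)\equiv0$. Equivalently, if $Q_C(x,y)\in\mathbb{C}[xy]$ then $P_C(x,y)\in\mathbb{C}[xy]$.
   Context: A contraction is a matrix with $\|C\|\le1$. Let $D=I-C^*C$, $H(t)=\tfrac12(e^{-it}C+e^{it}C^* )$, $K(t)=\tfrac{i}{2}(e^{it}C^*-e^{-it}C)$, $T_1(t,\mu)=\operatorname{tr}((\mu I-H(t))^{-1}K(t))$, $T_2(t,\lambda)=\operatorname{tr}((\lambda^2I-\lambda H(t)-\frac14D)^{-1}\lambda K(t))$, regarded as rational functions of $\mu$, resp. $\lambda$, for each real $t$; $\equiv 0$ means vanishing identically in all variables. $P_C(x,y)=\det(I-xC-yC^* )$, $Q_C(x,y)=\det(I-xC-yC^*-xyD)$, and $\mathbb{C}[xy]$ is the set of polynomials in the product $xy$ alone. *)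

theory Defs
  imports "HOL-Analysis.Analysis"
begin

definition msc :: "complex \<Rightarrow> complex^'n^'n \<Rightarrow> complex^'n^'n" (infixr "*m" 75) where
  "c *m A = (\<chi> i j. c * A $ i $ j)"

definition adj :: "complex^'n^'n \<Rightarrow> complex^'n^'n" where
  "adj C = (\<chi> i j. cnj (C $ j $ i))"

primrec mpow :: "complex^'n^'n \<Rightarrow> nat \<Rightarrow> complex^'n^'n" where
  "mpow C 0 = mat 1"
| "mpow C (Suc k) = C ** mpow C k"

definition nilpotent_mat :: "complex^'n^'n \<Rightarrow> bool" where
  "nilpotent_mat C \<longleftrightarrow> (\<exists>k. mpow C k = 0)"

definition contraction :: "complex^'n^'n \<Rightarrow> bool" where
  "contraction C \<longleftrightarrow> (\<forall>v. norm (C *v v) \<le> norm v)"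

definition defect :: "complex^'n^'n \<Rightarrow> complex^'n^'n" where
  "defect C = mat 1 - adj C ** C"

definition Hm :: "complex^'n^'n \<Rightarrow> real \<Rightarrow> complex^'n^'n" where
  "Hm C t = (1/2 :: complex) *m (exp (- \<i> * of_real t) *m C + exp (\<i> * of_real t) *m adj C)"

definition Km :: "complex^'n^'n \<Rightarrow> real \<Rightarrow> complex^'n^'n" where
  "Km C t = (\<i> / 2) *m (exp (\<i> * of_real t) *m adj C - exp (- \<i> * of_real t) *m C)"

definition T1 :: "complex^'n^'n \<Rightarrow> real \<Rightarrow> complex \<Rightarrow> complex" where
  "T1 C t \<mu> = trace (matrix_inv (\<mu> *m mat 1 - Hm C t) ** Km C t)"

definition T1_defined :: "complex^'n^'n \<Rightarrow> real \<Rightarrow> complex \<Rightarrow> bool" where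
  "T1_defined C t \<mu> \<longleftrightarrow> invertible (\<mu> *m mat 1 - Hm C t)"

definition T2 :: "complex^'n^'n \<Rightarrow> real \<Rightarrow> complex \<Rightarrow> complex" where
  "T2 C t lam = trace (matrix_inv (lam\<^sup>2 *m mat 1 - lam *m Hm C t - (1/4) *m defect C)
                        ** (lam *m Km C t))"

definition T2_defined :: "complex^'n^'n \<Rightarrow> real \<Rightarrow> complex \<Rightarrow> bool" where
  "T2_defined C t lam \<longleftrightarrow> invertible (lam\<^sup>2 *m mat 1 - lam *m Hm C t - (1/4) *m defect C)"

end

theory Submission
  imports Defs "HOL-Computational_Algebra.Fundamental_Theorem_Algebra"
begin



lemma msc_comp [simp]: "(c *m A) $ i $ j = c * A $ i $ j"
  by (simp add: msc_def)

lemma mat_comp: "(mat c :: 'a::zero^'n^'n) $ i $ j = (if i = j then c else 0)"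
  by (simp add: mat_def)

lemma msc_mult_left [simp]: "(c *m A) ** B = c *m (A ** B)"
  by (simp add: vec_eq_iff matrix_matrix_mult_def sum_distrib_left mult.assoc)

lemma msc_mult_right [simp]: "A ** (c *m B) = c *m (A ** B)"
  by (simp add: vec_eq_iff matrix_matrix_mult_def sum_distrib_left mult_ac)

lemma msc_add: "c *m (A + B) = c *m A + c *m B"
  by (simp add: vec_eq_iff algebra_simps)

lemma msc_diff: "c *m (A - B) = c *m A - c *m B"
  by (simp add: vec_eq_iff algebra_simps)

lemma msc_msc [simp]: "c *m (d *m A) = (c * d) *m A"
  by (simp add: vec_eq_iff)

lemma msc_one [simp]: "1 *m A = A"
  by (simp add: vec_eq_iff)

lemma msc_zero [simp]: "0 *m A = 0" "c *m 0 = 0"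
  by (simp_all add: vec_eq_iff)

lemma add_msc: "(c + d) *m A = c *m A + d *m A"
  by (simp add: vec_eq_iff algebra_simps)

lemma matrix_add_rdistrib: "(A + B) ** C = A ** C + B ** (C :: 'a::semiring_1^'n^'n)"
  by (simp add: vec_eq_iff matrix_matrix_mult_def sum.distrib algebra_simps)

lemma matrix_diff_rdistrib: "(A - B) ** C = A ** C - B ** (C :: 'a::ring_1^'n^'n)"
  by (simp add: vec_eq_iff matrix_matrix_mult_def sum_subtractf algebra_simps)

lemma matrix_diff_ldistrib: "C ** (A - B) = C ** A - C ** (B :: 'a::ring_1^'n^'n)"
  by (simp add: vec_eq_iff matrix_matrix_mult_def sum_subtractf algebra_simps)

lemma matrix_neg_left: "(- A) ** B = - (A ** (B :: 'a::ring_1^'n^'n))"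
  by (simp add: vec_eq_iff matrix_matrix_mult_def sum_negf)

lemma trace_msc [simp]: "trace (c *m A) = c * trace A"
  by (simp add: trace_def sum_distrib_left)

lemma trace_neg: "trace (- A) = - trace (A :: 'a::comm_ring_1^'n^'n)"
  by (simp add: trace_def sum_negf)

lemma trace_sum: "trace (sum f S) = (\<Sum>x\<in>S. trace (f x :: 'a::comm_ring_1^'n^'n))"
  by (simp add: trace_def sum_component; subst sum.swap; rule refl)

lemma matrix_sum_left: "(sum f S) ** B = (\<Sum>x\<in>S. f x ** (B :: 'a::comm_ring_1^'n^'n))"
  by (induction S rule: infinite_finite_induct) (auto simp: matrix_add_rdistrib)

lemma matrix_sum_right: "B ** (sum f S) = (\<Sum>x\<in>S. B ** (f x :: 'a::comm_ring_1^'n^'n))"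
  by (induction S rule: infinite_finite_induct) (auto simp: matrix_add_ldistrib)

lemma det_msc: "det (c *m A) = c ^ CARD('n) * det (A :: complex^'n^'n)"
proof -
  have "det (c *m A) = (\<Sum>p | p permutes (UNIV::'n set). of_int (sign p) * (c ^ CARD('n) * (\<Prod>i\<in>UNIV. A $ i $ p i)))"
    by (simp add: det_def prod.distrib)
  also have "\<dots> = c ^ CARD('n) * det A"
    by (simp add: det_def sum_distrib_left mult_ac)
  finally show ?thesis .
qed

lemma invertible_inv:
  assumes "invertible (A :: 'a::semiring_1^'n^'n)"
  shows "A ** matrix_inv A = mat 1" "matrix_inv A ** A = mat 1"
proof -
  from assms obtain B where "A ** B = mat 1 \<and> B ** A = mat 1" unfolding invertible_def by blast
  hence "A ** matrix_inv A = mat 1 \<and> matrix_inv A ** A = mat 1"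
    unfolding matrix_inv_def by (rule someI)
  thus "A ** matrix_inv A = mat 1" "matrix_inv A ** A = mat 1" by auto
qed

lemma adj_comp [simp]: "adj A $ i $ j = cnj (A $ j $ i)"
  by (simp add: adj_def)

lemma adj_mult: "adj (A ** B) = adj B ** adj A"
  by (simp add: vec_eq_iff matrix_matrix_mult_def mult.commute)

lemma adj_adj [simp]: "adj (adj A) = A"
  by (simp add: vec_eq_iff)

lemma adj_mat1 [simp]: "adj (mat 1) = mat 1"
  by (simp add: vec_eq_iff mat_comp)

lemma adj_zero [simp]: "adj 0 = 0"
  by (simp add: vec_eq_iff)

lemma trace_adj: "trace (adj A) = cnj (trace A)"
  by (simp add: trace_def)

lemma mpow_commute: "mpow A k ** A = A ** mpow A k"
  by (induction k) (simp_all, metis matrix_mul_assoc)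

lemma mpow_adj: "adj (mpow A k) = mpow (adj A) k"
proof (induction k)
  case 0 then show ?case by simp
next
  case (Suc k)
  have "adj (mpow A (Suc k)) = adj (mpow A k) ** adj A" by (simp add: adj_mult)
  also have "\<dots> = mpow (adj A) k ** adj A" using Suc by simp
  finally show ?case by (simp add: mpow_commute)
qed



definition evm :: "'a::comm_ring_1 poly^'n^'n \<Rightarrow> 'a \<Rightarrow> 'a^'n^'n" where
  "evm A s = (\<chi> i j. poly (A $ i $ j) s)"

lemma evm_comp [simp]: "evm A s $ i $ j = poly (A $ i $ j) s"
  by (simp add: evm_def)

lemma poly_det: "poly (det A) s = det (evm A s)"
  by (simp add: det_def poly_sum poly_prod)

definition jac :: "'a::comm_ring_1^'n^'n \<Rightarrow> 'a^'n^'n \<Rightarrow> 'a" where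
  "jac A V = (\<Sum>k\<in>UNIV. det (\<chi> i. if i = k then V $ i else A $ i))"

lemma evm_row: "(\<chi> i. if i = k then evm V s $ i else evm A s $ i) = evm (\<chi> i. if i = k then V $ i else A $ i) s"
  by (simp add: vec_eq_iff)

lemma poly_jac: "poly (jac A V) s = jac (evm A s) (evm V s)"
  by (simp add: jac_def poly_sum poly_det evm_row)

lemma det_row_replace:
  "det (\<chi> i. if i = k then V $ i else A $ i) =
   (\<Sum>p | p permutes (UNIV::'n set). of_int (sign p) * (V $ k $ p k * (\<Prod>i\<in>UNIV - {k}. A $ i $ p i)))"
  for A V :: "'a::comm_ring_1^'n^'n"
proof -
  have "\<And>p. (\<Prod>i\<in>UNIV. (\<chi> i. if i = k then V $ i else A $ i) $ i $ p i) = V $ k $ p k * (\<Prod>i\<in>UNIV - {k}. A $ i $ p i)"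
  proof -
    fix p :: "'n \<Rightarrow> 'n"
    have "(\<Prod>i\<in>UNIV. (\<chi> i. if i = k then V $ i else A $ i) $ i $ p i) =
          (\<chi> i. if i = k then V $ i else A $ i) $ k $ p k * (\<Prod>i\<in>UNIV - {k}. (\<chi> i. if i = k then V $ i else A $ i) $ i $ p i)"
      by (rule prod.remove) auto
    also have "(\<Prod>i\<in>UNIV - {k}. (\<chi> i. if i = k then V $ i else A $ i) $ i $ p i) = (\<Prod>i\<in>UNIV - {k}. A $ i $ p i)"
      by (rule prod.cong) auto
    finally show "?thesis p" by simp
  qed
  thus ?thesis by (simp add: det_def)
qed

lemma pderiv_sum': "pderiv (sum f S) = (\<Sum>x\<in>S. pderiv (f x))"
  by (induction S rule: infinite_finite_induct) (auto simp: pderiv_add)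

lemma pderiv_of_int [simp]: "pderiv (of_int k :: 'a::idom poly) = 0"
  by (simp add: of_int_poly)

lemma pderiv_det: "pderiv (det A) = jac A (\<chi> i j. pderiv (A $ i $ j))"
  for A :: "'a::idom poly^'n^'n"
proof -
  have "pderiv (det A) = (\<Sum>p | p permutes (UNIV::'n set). of_int (sign p) *
          (\<Sum>k\<in>(UNIV::'n set). (\<Prod>i\<in>UNIV - {k}. A $ i $ p i) * pderiv (A $ k $ p k)))"
    unfolding det_def by (simp add: pderiv_sum' pderiv_mult pderiv_prod)
  also have "\<dots> = (\<Sum>k\<in>(UNIV::'n set). \<Sum>p | p permutes (UNIV::'n set). of_int (sign p) *
          (pderiv (A $ k $ p k) * (\<Prod>i\<in>UNIV - {k}. A $ i $ p i)))"
    by (simp add: sum_distrib_left mult_ac; subst sum.swap; rule refl)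
  also have "\<dots> = jac A (\<chi> i j. pderiv (A $ i $ j))"
    unfolding jac_def det_row_replace by simp
  finally show ?thesis .
qed

lemma vm_sum_rows: "x v* A = (\<Sum>i\<in>UNIV. x $ i *s row i A)"
  by (simp add: vec_eq_iff vector_matrix_mult_def row_def sum_component)

lemma cramer_jac:
  fixes A V B :: "'a::field^'n^'n"
  assumes "B ** A = mat 1"
  shows "jac A V = det A * trace (V ** B)"
proof -
  have row_eq: "(\<chi> i. if i = k then V $ i else A $ i) =
     (\<chi> i. if i = k then (\<Sum>i\<in>UNIV. (V $ k v* B) $ i *s row i A) else row i A)" for k
  proof -
    have "(V $ k v* B) v* A = V $ k"
      by (simp add: vector_matrix_mul_assoc assms)
    hence "V $ k = (\<Sum>i\<in>UNIV. (V $ k v* B) $ i *s row i A)"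
      by (simp add: vm_sum_rows)
    moreover have "A $ i = row i A" for i by (simp add: vec_eq_iff row_def)
    ultimately show ?thesis by (intro Cart_lambda_cong) auto
  qed
  have "jac A V = (\<Sum>k\<in>UNIV. (V $ k v* B) $ k * det A)"
    unfolding jac_def row_eq cramer_lemma_transpose by simp
  also have "\<dots> = det A * trace (V ** B)"
    by (simp add: trace_def vector_matrix_mult_def matrix_matrix_mult_def sum_distrib_left mult_ac)
  finally show ?thesis .
qed



definition Gp :: "complex^'n^'n \<Rightarrow> complex poly^'n^'n" where
  "Gp X = (\<chi> i j. [: mat 1 $ i $ j, - X $ i $ j :])"
definition charP :: "complex^'n^'n \<Rightarrow> complex poly" where
  "charP X = det (Gp X)"
definition Rp :: "complex^'n^'n \<Rightarrow> complex poly^'n^'n" where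
  "Rp Y = (\<chi> i j. [: Y $ i $ j :])"
definition tau :: "complex^'n^'n \<Rightarrow> nat \<Rightarrow> complex" where
  "tau X k = trace (mpow X k)"

lemma evm_Gp: "evm (Gp X) s = mat 1 - s *m X"
  by (simp add: vec_eq_iff Gp_def mat_comp)

lemma evm_Rp [simp]: "evm (Rp Y) s = Y"
  by (simp add: vec_eq_iff Rp_def)

lemma pderiv_Gp: "(\<chi> i j. pderiv (Gp X $ i $ j)) = Rp (- X)"
  by (simp add: vec_eq_iff Gp_def Rp_def pderiv_pCons)

lemma poly_charP: "poly (charP X) s = det (mat 1 - s *m X)"
  by (simp add: charP_def poly_det evm_Gp)

lemma charP_coeff0: "coeff (charP X) 0 = 1"
  by (simp add: poly_0_coeff_0[symmetric] poly_charP)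

lemma charP_nz: "charP X \<noteq> 0"
  using charP_coeff0[of X] by auto

lemma degree_charP: "degree (charP X) \<le> CARD('n)"
  for X :: "complex^'n^'n"
proof -
  have "degree (of_int (sign p) * (\<Prod>i\<in>UNIV. Gp X $ i $ p i)) \<le> CARD('n)" for p
  proof -
    have "degree (of_int (sign p) * (\<Prod>i\<in>UNIV. Gp X $ i $ p i)) \<le> degree (of_int (sign p) :: complex poly) + degree (\<Prod>i\<in>UNIV. Gp X $ i $ p i)"
      by (rule degree_mult_le)
    also have "degree (of_int (sign p) :: complex poly) = 0" by (simp add: of_int_poly)
    also have "degree (\<Prod>i\<in>UNIV. Gp X $ i $ p i) \<le> (\<Sum>i\<in>UNIV. degree (Gp X $ i $ p i))"
      using degree_prod_sum_le[of UNIV "\<lambda>i. Gp X $ i $ p i"] by (simp add: o_def)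
    also have "\<dots> \<le> (\<Sum>i\<in>(UNIV::'n set). 1)"
      by (rule sum_mono) (simp add: Gp_def)
    finally show ?thesis by simp
  qed
  thus ?thesis unfolding charP_def det_def by (intro degree_sum_le) auto
qed

lemma poly_eq_cofinite:
  fixes p q1 q2 :: "complex poly"
  assumes "p \<noteq> 0" "\<And>s. poly p s \<noteq> 0 \<Longrightarrow> poly q1 s = poly q2 s"
  shows "q1 = q2"
proof (rule ccontr)
  assume "q1 \<noteq> q2"
  hence "q1 - q2 \<noteq> 0" by simp
  hence f1: "finite {s. poly (q1 - q2) s = 0}" by (rule poly_roots_finite)
  have f2: "finite {s. poly p s = 0}" using assms(1) by (rule poly_roots_finite)
  have "UNIV \<subseteq> {s. poly (q1 - q2) s = 0} \<union> {s. poly p s = 0}"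
    using assms(2) by auto
  hence "finite (UNIV :: complex set)" using f1 f2 finite_subset by blast
  thus False using infinite_UNIV_char_0 by blast
qed

lemma mpow_Suc_right: "mpow X (Suc k) = mpow X k ** X"
  by (simp add: mpow_commute)

lemma key_identity:
  fixes X :: "complex^'n^'n"
  assumes "det (mat 1 - s *m X) \<noteq> 0"
  shows "jac (mat 1 - s *m X) (- X) = det (mat 1 - s *m X) * (- (tau X 1 + s * tau X 2 + s^2 * tau X 3 + s^3 * tau X 4))
          + s^4 * jac (mat 1 - s *m X) (- mpow X 5)"
proof -
  let ?G = "mat 1 - s *m X"
  let ?B = "matrix_inv ?G"
  have inv: "invertible ?G" using assms by (simp add: invertible_det_nz)
  have BG: "?B ** ?G = mat 1" by (rule invertible_inv(2)[OF inv])
  have B1: "?B = mat 1 + s *m (?B ** X)"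
  proof -
    have "?B ** ?G = ?B - s *m (?B ** X)" by (simp add: matrix_diff_ldistrib)
    hence "?B - s *m (?B ** X) = mat 1" using BG by simp
    thus ?thesis by (metis diff_eq_eq)
  qed
  have step: "?B ** mpow X k = mpow X k + s *m (?B ** mpow X (Suc k))" for k
  proof -
    have "?B ** mpow X k = (mat 1 + s *m (?B ** X)) ** mpow X k" using B1 by simp
    also have "\<dots> = mpow X k + s *m (?B ** (X ** mpow X k))"
      by (simp add: matrix_add_rdistrib matrix_mul_assoc)
    finally show ?thesis by simp
  qed
  have tstep: "trace (?B ** mpow X k) = tau X k + s * trace (?B ** mpow X (Suc k))" for k
    using arg_cong[OF step[of k], of trace] by (simp add: trace_add tau_def)
  have "trace (?B ** mpow X 1) = tau X 1 + s * (tau X 2 + s * (tau X 3 + s * (tau X 4 + s * trace (?B ** mpow X 5))))"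
    using tstep[of 1] tstep[of 2] tstep[of 3] tstep[of 4] by (simp add: numeral_eq_Suc)
  hence tr: "trace (?B ** X) = tau X 1 + s * tau X 2 + s^2 * tau X 3 + s^3 * tau X 4 + s^4 * trace (?B ** mpow X 5)"
    by (simp add: algebra_simps power2_eq_square power3_eq_cube power4_eq_xxxx)
  have "jac ?G (- X) = det ?G * trace ((- X) ** ?B)" by (rule cramer_jac[OF BG])
  also have "trace ((- X) ** ?B) = - trace (?B ** X)"
    by (simp only: matrix_neg_left trace_neg trace_mul_sym[of X])
  finally have j1: "jac ?G (- X) = - det ?G * trace (?B ** X)" by simp
  have "jac ?G (- mpow X 5) = det ?G * trace ((- mpow X 5) ** ?B)" by (rule cramer_jac[OF BG])
  also have "trace ((- mpow X 5) ** ?B) = - trace (?B ** mpow X 5)"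
    by (simp only: matrix_neg_left trace_neg trace_mul_sym[of "mpow X 5"])
  finally have j5: "jac ?G (- mpow X 5) = - det ?G * trace (?B ** mpow X 5)" by simp
  show ?thesis unfolding j1 j5 tr by (simp add: algebra_simps)
qed


lemma poly_identity:
  fixes X :: "complex^'n^'n"
  shows "pderiv (charP X) = charP X * [:- tau X 1, - tau X 2, - tau X 3, - tau X 4:]
          + monom 1 4 * jac (Gp X) (Rp (- mpow X 5))"
proof -
  have "pderiv (charP X) = jac (Gp X) (Rp (- X))"
    unfolding charP_def pderiv_det pderiv_Gp ..
  also have "\<dots> = charP X * [:- tau X 1, - tau X 2, - tau X 3, - tau X 4:]
          + monom 1 4 * jac (Gp X) (Rp (- mpow X 5))"
  proof (rule poly_eq_cofinite[OF charP_nz[of X]])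
    fix s assume "poly (charP X) s \<noteq> 0"
    hence "det (mat 1 - s *m X) \<noteq> 0" by (simp add: poly_charP)
    note K = key_identity[OF this]
    have L: "poly (jac (Gp X) (Rp (- X))) s = jac (mat 1 - s *m X) (- X)"
      by (simp add: poly_jac evm_Gp)
    have R: "poly (charP X * [:- tau X 1, - tau X 2, - tau X 3, - tau X 4:]
          + monom 1 4 * jac (Gp X) (Rp (- mpow X 5))) s =
       det (mat 1 - s *m X) * (- tau X 1 + s * (- tau X 2 + s * (- tau X 3 + s * (- tau X 4))))
       + s^4 * jac (mat 1 - s *m X) (- mpow X 5)"
      apply (simp add: poly_jac evm_Gp poly_charP poly_monom)
      by algebra
    show "poly (jac (Gp X) (Rp (- X))) s = poly (charP X * [:- tau X 1, - tau X 2, - tau X 3, - tau X 4:]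
          + monom 1 4 * jac (Gp X) (Rp (- mpow X 5))) s"
      unfolding L R K by algebra
  qed
  finally show ?thesis .
qed



lemma coeff_monom_mult_small: "k < n \<Longrightarrow> coeff (monom c n * p) k = 0"
  by (simp add: coeff_monom_mult)

lemma newton_coeffs:
  fixes X :: "complex^'n^'n"
  defines "c \<equiv> coeff (charP X)"
  shows "c 1 = - tau X 1"
    "2 * c 2 = - tau X 2 - c 1 * tau X 1"
    "3 * c 3 = - tau X 3 - c 1 * tau X 2 - c 2 * tau X 1"
    "4 * c 4 = - tau X 4 - c 1 * tau X 3 - c 2 * tau X 2 - c 3 * tau X 1"
proof -
  have PI: "coeff (pderiv (charP X)) k = coeff (charP X * [:- tau X 1, - tau X 2, - tau X 3, - tau X 4:]
          + monom 1 4 * jac (Gp X) (Rp (- mpow X 5))) k" for k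
    by (subst poly_identity) rule
  have e: "of_nat (Suc k) * c (Suc k) = coeff (charP X * [:- tau X 1, - tau X 2, - tau X 3, - tau X 4:]) k" if "k < 4" for k
    using PI[of k] that by (simp add: coeff_pderiv c_def coeff_monom_mult_small)
  have c0: "c 0 = 1" by (simp add: c_def charP_coeff0)
  show "c 1 = - tau X 1" using e[of 0] c0 by (simp add: coeff_mult c_def)
  show "2 * c 2 = - tau X 2 - c 1 * tau X 1" using e[of 1] c0 by (simp add: coeff_mult c_def atMost_Suc numeral_eq_Suc)
  show "3 * c 3 = - tau X 3 - c 1 * tau X 2 - c 2 * tau X 1" using e[of 2] c0 by (simp add: coeff_mult c_def atMost_Suc numeral_eq_Suc)
  show "4 * c 4 = - tau X 4 - c 1 * tau X 3 - c 2 * tau X 2 - c 3 * tau X 1" using e[of 3] c0 by (simp add: coeff_mult c_def atMost_Suc numeral_eq_Suc)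
qed

lemma charP_tau12:
  fixes X Y :: "complex^'n^'n"
  assumes "charP X = charP Y"
  shows "tau X 1 = tau Y 1" "tau X 2 = tau Y 2"
proof -
  show t1: "tau X 1 = tau Y 1" using newton_coeffs(1)[of X] newton_coeffs(1)[of Y] assms by simp
  have "2 * coeff (charP X) 2 = 2 * coeff (charP Y) 2" using assms by simp
  thus "tau X 2 = tau Y 2" unfolding newton_coeffs(2) using t1 assms by simp
qed

lemma det_eq_tau12:
  fixes X Y :: "complex^'n^'n"
  assumes "\<And>s. det (mat 1 - s *m X) = det (mat 1 - s *m Y)"
  shows "tau X 1 = tau Y 1" "tau X 2 = tau Y 2"
proof -
  have "poly (charP X) = poly (charP Y)" using assms by (simp add: fun_eq_iff poly_charP)
  hence "charP X = charP Y" by (simp add: poly_eq_poly_eq_iff)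
  thus "tau X 1 = tau Y 1" "tau X 2 = tau Y 2" by (rule charP_tau12)+
qed

lemma tau_det_eq:
  fixes X Y :: "complex^'n^'n"
  assumes card: "CARD('n) \<le> 4"
    and t: "tau X 1 = tau Y 1" "tau X 2 = tau Y 2" "tau X 3 = tau Y 3" "tau X 4 = tau Y 4"
  shows "det (mat 1 - s *m X) = det (mat 1 - s *m Y)"
proof -
  let ?a = "coeff (charP X)" and ?b = "coeff (charP Y)"
  have 1: "?a 1 = ?b 1" using newton_coeffs(1)[of X] newton_coeffs(1)[of Y] t by simp
  have "2 * ?a 2 = 2 * ?b 2" using newton_coeffs(2)[of X] newton_coeffs(2)[of Y] t 1 by simp
  hence 2: "?a 2 = ?b 2" by simp
  have "3 * ?a 3 = 3 * ?b 3" using newton_coeffs(3)[of X] newton_coeffs(3)[of Y] t 1 2 by simp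
  hence 3: "?a 3 = ?b 3" by simp
  have "4 * ?a 4 = 4 * ?b 4" using newton_coeffs(4)[of X] newton_coeffs(4)[of Y] t 1 2 3 by simp
  hence 4: "?a 4 = ?b 4" by simp
  have "charP X = charP Y"
  proof (rule poly_eqI)
    fix k
    show "?a k = ?b k"
    proof (cases "k \<le> 4")
      case True
      hence "k = 0 \<or> k = 1 \<or> k = 2 \<or> k = 3 \<or> k = 4" by auto
      thus ?thesis using 1 2 3 4 by (auto simp: charP_coeff0)
    next
      case False
      hence "degree (charP X) < k" "degree (charP Y) < k"
        using degree_charP[of X] degree_charP[of Y] card by auto
      thus ?thesis by (simp add: coeff_eq_0)
    qed
  qed
  thus ?thesis by (metis poly_charP)
qed



lemma mpow_add: "mpow A (a + b) = mpow A a ** mpow A b"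
  by (induction a) (simp_all add: matrix_mul_assoc)

lemma mpow_mult: "mpow (mpow A k) m = mpow A (k * m)"
  by (induction m) (simp_all add: mpow_add)

lemma mpow_one [simp]: "mpow A 1 = A"
  by simp

lemma mpow_ge_zero: "mpow A m = 0 \<Longrightarrow> m \<le> j \<Longrightarrow> mpow A j = 0"
proof -
  assume a: "mpow A m = 0" "m \<le> j"
  hence "j = m + (j - m)" by simp
  hence "mpow A j = mpow A m ** mpow A (j - m)" by (metis mpow_add)
  thus ?thesis using a by simp
qed

lemma nil_inverse:
  "(mat 1 - s *m N) ** (\<Sum>j<m. (s ^ j) *m mpow N j) = mat 1 - (s ^ m) *m mpow N m"
proof (induction m)
  case 0 then show ?case by simp
next
  case (Suc m)
  have e1: "(\<Sum>j<Suc m. (s ^ j) *m mpow N j) = (\<Sum>j<m. (s ^ j) *m mpow N j) + (s ^ m) *m mpow N m"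
    by simp
  have e2: "(mat 1 - s *m N) ** ((s ^ m) *m mpow N m) = (s ^ m) *m mpow N m - (s ^ Suc m) *m mpow N (Suc m)"
    by (simp add: matrix_diff_rdistrib msc_diff mult.commute)
  have "(mat 1 - s *m N) ** (\<Sum>j<Suc m. (s ^ j) *m mpow N j)
      = (mat 1 - (s ^ m) *m mpow N m) + ((s ^ m) *m mpow N m - (s ^ Suc m) *m mpow N (Suc m))"
    unfolding e1 matrix_add_ldistrib Suc e2 ..
  also have "\<dots> = mat 1 - (s ^ Suc m) *m mpow N (Suc m)"
    by (simp add: algebra_simps)
  finally show ?case .
qed

lemma nil_det:
  assumes "mpow N m = 0"
  shows "det (mat 1 - s *m N) = 1"
proof -
  have nz: "poly (charP N) z \<noteq> 0" for z
  proof
    assume "poly (charP N) z = 0"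
    hence "det (mat 1 - z *m N) = 0" by (simp add: poly_charP)
    moreover have "det (mat 1 - z *m N) * det (\<Sum>j<m. (z ^ j) *m mpow N j) = 1"
      using nil_inverse[of z N m] assms by (simp add: det_mul[symmetric])
    ultimately show False by simp
  qed
  have "constant (poly (charP N))"
    using fundamental_theorem_of_algebra nz by blast
  hence "poly (charP N) s = poly (charP N) 0" unfolding constant_def by blast
  thus ?thesis by (simp add: poly_charP)
qed

lemma nil_trace:
  assumes "mpow N m = 0"
  shows "trace N = 0"
proof -
  have "poly (charP N) = poly 1" using nil_det[OF assms] by (simp add: fun_eq_iff poly_charP)
  hence "charP N = 1" by (simp add: poly_eq_poly_eq_iff)
  hence "coeff (charP N) 1 = 0" by simp
  thus ?thesis using newton_coeffs(1)[of N] by (simp add: tau_def)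
qed

lemma nil_trace_pow:
  assumes "mpow N m = 0" "1 \<le> k"
  shows "trace (mpow N k) = 0"
proof -
  have "mpow (mpow N k) m = 0" using assms
    by (simp add: mpow_mult) (rule mpow_ge_zero[OF assms(1)], simp)
  thus ?thesis by (rule nil_trace)
qed

lemma nil_adj:
  assumes "mpow N m = 0"
  shows "mpow (adj N) m = 0"
  using assms by (metis mpow_adj adj_zero)



lemma poly_zero_on_infinite:
  fixes p :: "complex poly"
  assumes "infinite S" "\<And>x. x \<in> S \<Longrightarrow> poly p x = 0"
  shows "p = 0"
proof (rule ccontr)
  assume "p \<noteq> 0"
  hence "finite {x. poly p x = 0}" by (rule poly_roots_finite)
  moreover have "S \<subseteq> {x. poly p x = 0}" using assms(2) by auto
  ultimately show False using assms(1) finite_subset by blast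
qed

definition Uc :: "complex set" where
  "Uc = (\<lambda>t::real. exp (- \<i> * of_real t)) ` {0<..<1}"

lemma infinite_Uc: "infinite Uc"
proof -
  have "inj_on (\<lambda>t::real. exp (- \<i> * of_real t)) {0<..<1}"
  proof (rule inj_onI)
    fix x y :: real assume xy: "x \<in> {0<..<1}" "y \<in> {0<..<1}" "exp (- \<i> * of_real x) = exp (- \<i> * of_real y)"
    have "\<bar>Im (- \<i> * of_real x) - Im (- \<i> * of_real y)\<bar> < 2 * pi"
      using xy(1,2) pi_gt3 by auto
    hence "- \<i> * of_real x = - \<i> * (of_real y :: complex)"
      using exp_complex_eqI xy(3) by blast
    thus "x = y" by simp
  qed
  moreover have "infinite {0<..<(1::real)}" by (rule infinite_Ioo) simp
  ultimately show ?thesis unfolding Uc_def using finite_imageD by blast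
qed

lemma Uc_nz: "w \<in> Uc \<Longrightarrow> w \<noteq> 0"
  by (auto simp: Uc_def)

lemma infinite_diff_finite: "infinite S \<Longrightarrow> finite F \<Longrightarrow> infinite (S - F)"
  by (metis Diff_infinite_finite)

lemma jac_logderiv:
  fixes MP :: "complex poly^'n^'n"
  assumes w: "w \<noteq> 0" and ev: "evm MP w = w *m M" and inv: "invertible M"
  shows "w * poly (pderiv (det MP)) w =
         poly (det MP) w * trace (matrix_inv M ** evm (\<chi> i j. pderiv (MP $ i $ j)) w)"
proof -
  let ?V = "evm (\<chi> i j. pderiv (MP $ i $ j)) w"
  let ?B = "(1 / w) *m matrix_inv M"
  have BM: "?B ** (w *m M) = mat 1"
    using invertible_inv(2)[OF inv] w by simp
  have "poly (pderiv (det MP)) w = jac (w *m M) ?V"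
    by (simp add: pderiv_det poly_jac ev)
  also have "\<dots> = det (w *m M) * trace (?V ** ?B)" by (rule cramer_jac[OF BM])
  also have "trace (?V ** ?B) = (1 / w) * trace (matrix_inv M ** ?V)"
    by (simp add: trace_mul_sym[of ?V])
  finally show ?thesis using w by (simp add: poly_det ev)
qed

lemma poly_euler_monom:
  fixes P :: "complex poly"
  assumes "monom 1 1 * pderiv P = smult (of_nat n) P"
  shows "P = monom (coeff P n) n"
proof (rule poly_eqI)
  fix k
  have e1: "coeff (monom 1 1 * pderiv P) k = of_nat n * coeff P k" using assms by simp
  have e2: "coeff (monom 1 1 * pderiv P) k = of_nat k * coeff P k"
    by (cases k) (simp_all add: coeff_monom_mult coeff_pderiv)
  have "(of_nat k - of_nat n) * coeff P k = 0"
    by (metis e1 e2 left_diff_distrib diff_self)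
  show "coeff P k = coeff (monom (coeff P n) n) k"
  proof (cases "k = n")
    case True then show ?thesis by (simp add: coeff_monom)
  next
    case False
    hence "(of_nat k - of_nat n :: complex) \<noteq> 0" by simp
    with \<open>(of_nat k - of_nat n) * coeff P k = 0\<close> have "coeff P k = 0" by simp
    thus ?thesis using False by (simp add: coeff_monom)
  qed
qed



definition Hw :: "complex^'n^'n \<Rightarrow> complex \<Rightarrow> complex^'n^'n" where
  "Hw C w = (1/2) *m (w *m C + (1/w) *m adj C)"

definition Mlam :: "complex^'n^'n \<Rightarrow> complex \<Rightarrow> complex \<Rightarrow> complex^'n^'n" where
  "Mlam C lam w = lam\<^sup>2 *m mat 1 - lam *m Hw C w - (1/4) *m defect C"

definition MPl :: "complex^'n^'n \<Rightarrow> complex \<Rightarrow> complex poly^'n^'n" where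
  "MPl C lam = (\<chi> i j. [: -(lam/2) * adj C $ i $ j, lam\<^sup>2 * mat 1 $ i $ j - (1/4) * defect C $ i $ j, -(lam/2) * C $ i $ j :])"

lemma exp_i_eq: "exp (\<i> * of_real t) = 1 / exp (- \<i> * of_real t)"
  by (simp add: exp_minus divide_inverse)

lemma Hm_eq: "Hm C t = Hw C (exp (- \<i> * of_real t))"
  unfolding Hm_def Hw_def exp_i_eq ..

lemma Km_eq: "Km C t = (\<i>/2) *m ((1 / exp (- \<i> * of_real t)) *m adj C - exp (- \<i> * of_real t) *m C)"
  unfolding Km_def exp_i_eq ..

lemma defect_comp: "defect C $ i $ j = mat 1 $ i $ j - (adj C ** C) $ i $ j"
  by (simp add: defect_def)

lemma evm_MPl: "w \<noteq> 0 \<Longrightarrow> evm (MPl C lam) w = w *m Mlam C lam w"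
  by (simp add: vec_eq_iff MPl_def Mlam_def Hw_def field_simps power2_eq_square)

lemma evm_VPl: "evm (\<chi> i j. pderiv (MPl C lam $ i $ j)) w = lam\<^sup>2 *m mat 1 - (1/4) *m defect C - (lam * w) *m C"
  by (simp add: vec_eq_iff MPl_def pderiv_pCons field_simps)

lemma lamK: "w \<noteq> 0 \<Longrightarrow> lam *m ((\<i>/2) *m ((1 / w) *m adj C - w *m C)) =
   \<i> *m ((lam\<^sup>2 *m mat 1 - (1/4) *m defect C - (lam * w) *m C) - Mlam C lam w)"
  by (simp add: vec_eq_iff Mlam_def Hw_def field_simps power2_eq_square)

lemma B1:
  fixes C :: "complex^'n^'n"
  assumes hyp: "\<forall>t lam. T2_defined C t lam \<longrightarrow> T2 C t lam = 0"
    and w: "w \<noteq> 0"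
  shows "det (Mlam C lam w) = det (Mlam C lam 1)"
proof -
  define P where "P = det (MPl C lam)"
  define E where "E = monom 1 1 * pderiv P - smult (of_nat CARD('n)) P"
  have poly_P: "poly P v = v ^ CARD('n) * det (Mlam C lam v)" if "v \<noteq> 0" for v
    using that by (simp add: P_def poly_det evm_MPl det_msc)
  have Ezero: "poly E v = 0" if v: "v \<in> Uc" "poly P v \<noteq> 0" for v
  proof -
    obtain t :: real where vt: "v = exp (- \<i> * of_real t)" using v(1) unfolding Uc_def by auto
    have v0: "v \<noteq> 0" using vt by simp
    let ?M = "Mlam C lam v"
    let ?V = "lam\<^sup>2 *m mat 1 - (1/4) *m defect C - (lam * v) *m C"
    have "det ?M \<noteq> 0" using v(2) poly_P[OF v0] by auto
    hence inv: "invertible ?M" by (simp add: invertible_det_nz)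
    hence "T2_defined C t lam" unfolding T2_defined_def Hm_eq Mlam_def[symmetric] vt[symmetric] .
    hence "T2 C t lam = 0" using hyp by blast
    hence "trace (matrix_inv ?M ** (lam *m Km C t)) = 0"
      unfolding T2_def Hm_eq Mlam_def[symmetric] vt[symmetric] .
    hence "trace (matrix_inv ?M ** (\<i> *m (?V - ?M))) = 0"
      unfolding Km_eq vt[symmetric] lamK[OF v0] .
    hence "\<i> * (trace (matrix_inv ?M ** ?V) - trace (matrix_inv ?M ** ?M)) = 0"
      by (simp add: matrix_diff_ldistrib trace_sub)
    hence "trace (matrix_inv ?M ** ?V) = trace (matrix_inv ?M ** ?M)" by simp
    also have "\<dots> = of_nat CARD('n)" by (simp add: invertible_inv(2)[OF inv] trace_I)
    finally have tr: "trace (matrix_inv ?M ** ?V) = of_nat CARD('n)" .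
    have "v * poly (pderiv P) v = poly P v * trace (matrix_inv ?M ** evm (\<chi> i j. pderiv (MPl C lam $ i $ j)) v)"
      unfolding P_def by (rule jac_logderiv[OF v0 evm_MPl[OF v0] inv])
    also have "\<dots> = poly P v * of_nat CARD('n)" unfolding evm_VPl tr ..
    finally show ?thesis by (simp add: E_def poly_monom)
  qed
  have E0: "E = 0"
  proof (cases "P = 0")
    case True then show ?thesis by (simp add: E_def)
  next
    case False
    hence "finite {v. poly P v = 0}" by (rule poly_roots_finite)
    hence "infinite (Uc - {v. poly P v = 0})" using infinite_Uc by (rule infinite_diff_finite[rotated])
    thus ?thesis by (rule poly_zero_on_infinite) (auto intro: Ezero)
  qed
  hence "monom 1 1 * pderiv P = smult (of_nat CARD('n)) P" by (simp add: E_def)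
  hence Pm: "P = monom (coeff P CARD('n)) CARD('n)" by (rule poly_euler_monom)
  have "det (Mlam C lam v) = coeff P CARD('n)" if "v \<noteq> 0" for v
  proof -
    have "poly P v = poly (monom (coeff P CARD('n)) CARD('n)) v" using Pm by (rule arg_cong)
    hence "v ^ CARD('n) * det (Mlam C lam v) = v ^ CARD('n) * coeff P CARD('n)"
      using poly_P[OF that] by (simp add: poly_monom mult.commute)
    moreover have "v ^ CARD('n) \<noteq> 0" using that by simp
    ultimately show ?thesis by (metis mult_left_cancel)
  qed
  thus ?thesis using w by simp
qed



definition Qf :: "complex^'n^'n \<Rightarrow> complex \<Rightarrow> complex \<Rightarrow> complex" where
  "Qf C a b = det (mat 1 - a *m C - b *m adj C - (a * b) *m defect C)"

lemma Mlam_Q: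
  assumes "w \<noteq> 0" "r \<noteq> 0" "lam = 1 / (2 * r)"
  shows "Mlam C lam w = lam\<^sup>2 *m (mat 1 - (r * w) *m C - (r / w) *m adj C - ((r * w) * (r / w)) *m defect C)"
  using assms(1,2) unfolding assms(3) by (simp add: vec_eq_iff Mlam_def Hw_def field_simps power2_eq_square)

lemma B2:
  fixes C :: "complex^'n^'n"
  assumes hyp: "\<forall>t lam. T2_defined C t lam \<longrightarrow> T2 C t lam = 0"
    and c: "c \<noteq> 0" and x: "x \<noteq> 0"
  shows "Qf C (c * x) (1 / c) = Qf C x 1"
proof -
  define r where "r = csqrt x"
  have r2: "r * r = x" unfolding r_def by (metis power2_csqrt power2_eq_square)
  have r0: "r \<noteq> 0" using r2 x by auto
  define lam where "lam = 1 / (2 * r)"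
  have l0: "lam \<noteq> 0" using r0 by (simp add: lam_def)
  have cr: "c * r \<noteq> 0" using c r0 by simp
  have "det (Mlam C lam (c * r)) = det (Mlam C lam 1)" by (rule B1[OF hyp cr])
  also have "\<dots> = det (Mlam C lam r)" by (rule B1[OF hyp r0, symmetric])
  finally have e: "det (Mlam C lam (c * r)) = det (Mlam C lam r)" .
  have e1: "det (Mlam C lam (c * r)) = (lam\<^sup>2) ^ CARD('n) * Qf C (c * x) (1 / c)"
  proof -
    have h1: "r * (c * r) = c * x" using r2 by (simp add: mult_ac)
    have h2: "r / (c * r) = 1 / c" using r0 c by (simp add: field_simps)
    show ?thesis unfolding Mlam_Q[OF cr r0 lam_def] h1 h2 det_msc Qf_def ..
  qed
  have e2: "det (Mlam C lam r) = (lam\<^sup>2) ^ CARD('n) * Qf C x 1"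
  proof -
    have h2: "r / r = 1" using r0 by simp
    show ?thesis unfolding Mlam_Q[OF r0 r0 lam_def] r2 h2 det_msc Qf_def ..
  qed
  show ?thesis using e e1 e2 l0 by simp
qed



definition Rc :: "complex^'n^'n \<Rightarrow> nat \<Rightarrow> complex \<Rightarrow> complex^'n^'n" where
  "Rc C M c = (\<Sum>k<M. ((1/c) ^ k) *m mpow (adj C) k)"

definition Yc :: "complex^'n^'n \<Rightarrow> nat \<Rightarrow> complex \<Rightarrow> complex^'n^'n" where
  "Yc C M c = c *m C + Rc C M c"

lemma Rc_inv:
  assumes "mpow (adj C) M = 0"
  shows "(mat 1 - (1/c) *m adj C) ** Rc C M c = mat 1"
  using nil_inverse[of "1/c" "adj C" M] assms by (simp add: Rc_def)

lemma Yc_factor: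
  assumes "mpow (adj C) M = 0" "c \<noteq> 0"
  shows "(mat 1 - (1/c) *m adj C) ** (mat 1 - x *m Yc C M c) =
         mat 1 - (c * x) *m C - (1/c) *m adj C - ((c * x) * (1/c)) *m defect C"
proof -
  have "(mat 1 - (1/c) *m adj C) ** (mat 1 - x *m Yc C M c) =
        (mat 1 - (1/c) *m adj C) - x *m ((mat 1 - (1/c) *m adj C) ** (c *m C) + mat 1)"
    by (simp add: Yc_def matrix_diff_ldistrib matrix_add_ldistrib Rc_inv[OF assms(1)])
  also have "(mat 1 - (1/c) *m adj C) ** (c *m C) = c *m C - adj C ** C"
    using assms(2) by (simp add: matrix_diff_rdistrib msc_diff)
  finally show ?thesis using assms(2)
    by (simp add: vec_eq_iff defect_comp field_simps)
qed

lemma det_Yc: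
  assumes "mpow (adj C) M = 0" "c \<noteq> 0"
  shows "det (mat 1 - x *m Yc C M c) = Qf C (c * x) (1/c)"
proof -
  have "det (mat 1 - (1/c) *m adj C) * det (mat 1 - x *m Yc C M c) = Qf C (c * x) (1/c)"
    unfolding det_mul[symmetric] Yc_factor[OF assms] Qf_def ..
  thus ?thesis using nil_det[OF assms(1)] by simp
qed

lemma trace_Rc_Rc:
  fixes C :: "complex^'n^'n"
  assumes "mpow (adj C) m = 0" "0 < M"
  shows "trace (Rc C M c ** Rc C M c) = of_nat CARD('n)"
proof -
  have tr: "trace (mpow (adj C) k ** mpow (adj C) l) = (if k = 0 \<and> l = 0 then of_nat CARD('n) else 0)" for k l
  proof -
    have "trace (mpow (adj C) k ** mpow (adj C) l) = trace (mpow (adj C) (k + l))" by (simp add: mpow_add)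
    thus ?thesis using nil_trace_pow[OF assms(1), of "k + l"] by (auto simp: trace_I)
  qed
  have "trace (Rc C M c ** Rc C M c) = (\<Sum>k<M. (1/c)^k * (\<Sum>l<M. (1/c)^l * trace (mpow (adj C) l ** mpow (adj C) k)))"
    by (simp add: Rc_def matrix_sum_left matrix_sum_right trace_sum)
  also have "\<dots> = (\<Sum>k<M. (1/c)^k * (\<Sum>l<M. (1/c)^l * (if l = 0 \<and> k = 0 then of_nat CARD('n) else 0)))"
    unfolding tr ..
  also have "\<dots> = (\<Sum>k<M. (1/c)^k * (if k = 0 then of_nat CARD('n) else 0))"
  proof (intro sum.cong refl)
    fix k :: nat
    have "(\<Sum>l<M. (1/c)^l * (if l = 0 \<and> k = 0 then of_nat CARD('n) else 0)) = (\<Sum>l<M. (if l = 0 then (if k = 0 then of_nat CARD('n) else 0) else 0))"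
      by (intro sum.cong refl) auto
    also have "\<dots> = (if k = 0 then of_nat CARD('n) else 0)" using assms(2) by (simp add: sum.delta)
    finally show "(1/c)^k * (\<Sum>l<M. (1/c)^l * (if l = 0 \<and> k = 0 then of_nat CARD('n) else 0)) = (1/c)^k * (if k = 0 then of_nat CARD('n) else (0::complex))" by simp
  qed
  also have "\<dots> = (\<Sum>k<M. (if k = 0 then of_nat CARD('n) else 0))"
    by (intro sum.cong refl) auto
  also have "\<dots> = of_nat CARD('n)" using assms(2) by (simp add: sum.delta)
  finally show ?thesis .
qed



lemma trace_C_Rc: "trace (C ** Rc C M c) = (\<Sum>k<M. (1/c)^k * trace (C ** mpow (adj C) k))"
  by (simp add: Rc_def matrix_sum_right trace_sum)

lemma gamma_zero:
  fixes C :: "complex^'n^'n"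
  assumes hyp: "\<forall>t lam. T2_defined C t lam \<longrightarrow> T2 C t lam = 0"
    and nil: "mpow C m = 0"
  shows "trace (C ** mpow (adj C) 2) = 0" "trace (C ** mpow (adj C) 3) = 0"
proof -
  define M where "M = m + 4"
  define g where "g k = trace (C ** mpow (adj C) k)" for k
  have nilA: "mpow (adj C) M = 0"
    using mpow_ge_zero[OF nil_adj[OF nil]] by (simp add: M_def)
  have trC: "trace C = 0" by (rule nil_trace[OF nil])
  have trCC: "trace (C ** C) = 0" using nil_trace_pow[OF nil, of 2] by (simp add: numeral_eq_Suc)
  have g0: "g 0 = 0" using trC by (simp add: g_def)
  define S where "S c = (\<Sum>k<M. (1/c)^k * g k)" for c
  have trY: "tau (Yc C M c) 2 = 2 * c * S c + of_nat CARD('n)" for c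
  proof -
    have "tau (Yc C M c) 2 = trace ((c *m C + Rc C M c) ** (c *m C + Rc C M c))"
      by (simp add: tau_def Yc_def numeral_eq_Suc)
    also have "\<dots> = c * c * trace (C ** C) + c * trace (C ** Rc C M c) + c * trace (Rc C M c ** C) + trace (Rc C M c ** Rc C M c)"
      apply (simp add: matrix_add_ldistrib matrix_add_rdistrib trace_add)
      by (simp add: algebra_simps)
    also have "trace (Rc C M c ** C) = trace (C ** Rc C M c)" by (rule trace_mul_sym)
    also have "trace (Rc C M c ** Rc C M c) = of_nat CARD('n)"
      by (rule trace_Rc_Rc[OF nil_adj[OF nil]]) (simp add: M_def)
    finally show ?thesis using trCC by (simp add: trace_C_Rc S_def g_def)
  qed
  have SS: "c * S c = S 1" if c: "c \<noteq> 0" for c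
  proof -
    have "det (mat 1 - x *m Yc C M c) = det (mat 1 - x *m Yc C M 1)" for x
    proof (cases "x = 0")
      case True then show ?thesis by simp
    next
      case False
      have "det (mat 1 - x *m Yc C M c) = Qf C (c * x) (1/c)" by (rule det_Yc[OF nilA c])
      also have "\<dots> = Qf C x 1" by (rule B2[OF hyp c False])
      also have "\<dots> = det (mat 1 - x *m Yc C M 1)" using det_Yc[OF nilA, of 1 x] by simp
      finally show ?thesis .
    qed
    hence "tau (Yc C M c) 2 = tau (Yc C M 1) 2" by (rule det_eq_tau12(2))
    thus ?thesis unfolding trY by simp
  qed
  define p where "p = (\<Sum>k<m+3. monom (g (Suc k)) k)"
  have cp: "coeff p j = g (Suc j)" if "j < m + 3" for j
    using that by (simp add: p_def coeff_sum coeff_monom sum.delta')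
  have pS: "poly p u = S 1" if u: "u \<noteq> 0" for u
  proof -
    have ms: "M = Suc (m+3)" by (simp add: M_def)
    have "S (1/u) = (\<Sum>k<Suc (m+3). u^k * g k)" unfolding S_def ms by simp
    also have "\<dots> = (\<Sum>k<m+3. u^(Suc k) * g (Suc k))"
      by (subst sum.lessThan_Suc_shift) (simp add: g0)
    also have "\<dots> = u * poly p u"
      by (simp add: p_def poly_sum poly_monom sum_distrib_left mult_ac)
    finally have "S (1/u) = u * poly p u" .
    moreover have "(1/u) * S (1/u) = S 1" using SS[of "1/u"] u by simp
    ultimately show ?thesis using u by simp
  qed
  have "p - [:S 1:] = 0"
  proof (rule poly_zero_on_infinite)
    show "infinite (UNIV - {0::complex})" by (simp add: infinite_UNIV_char_0)
    show "poly (p - [:S 1:]) u = 0" if "u \<in> UNIV - {0}" for u using pS[of u] that by simp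
  qed
  hence pc: "p = [:S 1:]" by simp
  have "g 2 = coeff p 1" using cp[of 1] by (simp add: numeral_eq_Suc)
  thus "trace (C ** mpow (adj C) 2) = 0" using pc by (simp add: g_def)
  have "g 3 = coeff p 2" using cp[of 2] by (simp add: numeral_eq_Suc)
  thus "trace (C ** mpow (adj C) 3) = 0" using pc by (simp add: g_def numeral_eq_Suc)
qed



lemma trace_rot3: "trace (X ** (Y ** Z)) = trace (Y ** (Z ** (X :: 'a::comm_ring_1^'n^'n)))"
  by (metis matrix_mul_assoc trace_mul_sym)

lemma trace_rot4: "trace (W ** (X ** (Y ** Z))) = trace (X ** (Y ** (Z ** (W :: 'a::comm_ring_1^'n^'n))))"
  by (metis matrix_mul_assoc trace_mul_sym)

lemma F_traces:
  fixes A B :: "complex^'n^'n" and a b :: complex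
  defines "F \<equiv> a *m A + b *m B"
  shows "trace (mpow F 1) = a * trace A + b * trace B"
    "trace (mpow F 2) = a * a * trace (A ** A) + a * b * trace (A ** B) + b * a * trace (B ** A) + b * b * trace (B ** B)"
    "trace (mpow F 3) = a * a * a * trace (A ** (A ** A)) + a * a * b * trace (A ** (A ** B)) + a * b * a * trace (A ** (B ** A)) + a * b * b * trace (A ** (B ** B)) + b * a * a * trace (B ** (A ** A)) + b * a * b * trace (B ** (A ** B)) + b * b * a * trace (B ** (B ** A)) + b * b * b * trace (B ** (B ** B))"
    "trace (mpow F 4) = a * a * a * a * trace (A ** (A ** (A ** A))) + a * a * a * b * trace (A ** (A ** (A ** B))) + a * a * b * a * trace (A ** (A ** (B ** A))) + a * a * b * b * trace (A ** (A ** (B ** B))) + a * b * a * a * trace (A ** (B ** (A ** A))) + a * b * a * b * trace (A ** (B ** (A ** B))) + a * b * b * a * trace (A ** (B ** (B ** A))) + a * b * b * b * trace (A ** (B ** (B ** B))) + b * a * a * a * trace (B ** (A ** (A ** A))) + b * a * a * b * trace (B ** (A ** (A ** B))) + b * a * b * a * trace (B ** (A ** (B ** A))) + b * a * b * b * trace (B ** (A ** (B ** B))) + b * b * a * a * trace (B ** (B ** (A ** A))) + b * b * a * b * trace (B ** (B ** (A ** B))) + b * b * b * a * trace (B ** (B ** (B ** A))) + b * b * b * b * trace (B ** (B ** (B ** B)))"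
  unfolding F_def by (simp_all add: matrix_add_ldistrib matrix_add_rdistrib trace_add numeral_eq_Suc algebra_simps)



lemma word_traces:
  fixes C :: "complex^'n^'n"
  assumes nil: "mpow C m = 0"
    and g2: "trace (C ** mpow (adj C) 2) = 0" and g3: "trace (C ** mpow (adj C) 3) = 0"
  defines "B \<equiv> adj C"
  shows "trace C = 0" "trace B = 0" "trace (C ** C) = 0" "trace (B ** B) = 0"
    "trace (C ** (C ** C)) = 0" "trace (B ** (B ** B)) = 0"
    "trace (C ** (C ** (C ** C))) = 0" "trace (B ** (B ** (B ** B))) = 0"
    "trace (C ** (B ** B)) = 0" "trace (B ** (B ** C)) = 0" "trace (B ** (C ** B)) = 0"
    "trace (C ** (C ** B)) = 0" "trace (C ** (B ** C)) = 0" "trace (B ** (C ** C)) = 0"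
    "trace (C ** (B ** (B ** B))) = 0" "trace (B ** (B ** (B ** C))) = 0"
    "trace (B ** (B ** (C ** B))) = 0" "trace (B ** (C ** (B ** B))) = 0"
    "trace (C ** (C ** (C ** B))) = 0" "trace (C ** (C ** (B ** C))) = 0"
    "trace (C ** (B ** (C ** C))) = 0" "trace (B ** (C ** (C ** C))) = 0"
proof -
  have nilB: "mpow B m = 0" unfolding B_def by (rule nil_adj[OF nil])
  show "trace C = 0" by (rule nil_trace[OF nil])
  show "trace B = 0" by (rule nil_trace[OF nilB])
  show "trace (C ** C) = 0" using nil_trace_pow[OF nil, of 2] by (simp add: numeral_eq_Suc)
  show "trace (B ** B) = 0" using nil_trace_pow[OF nilB, of 2] by (simp add: numeral_eq_Suc)
  show "trace (C ** (C ** C)) = 0" using nil_trace_pow[OF nil, of 3] by (simp add: numeral_eq_Suc)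
  show "trace (B ** (B ** B)) = 0" using nil_trace_pow[OF nilB, of 3] by (simp add: numeral_eq_Suc)
  show "trace (C ** (C ** (C ** C))) = 0" using nil_trace_pow[OF nil, of 4] by (simp add: numeral_eq_Suc)
  show "trace (B ** (B ** (B ** B))) = 0" using nil_trace_pow[OF nilB, of 4] by (simp add: numeral_eq_Suc)
  show a1: "trace (C ** (B ** B)) = 0" using g2 by (simp add: B_def numeral_eq_Suc)
  show a2: "trace (B ** (B ** C)) = 0" using a1 trace_rot3[of C B B] by simp
  show "trace (B ** (C ** B)) = 0" using a2 trace_rot3[of B B C] by simp
  have "trace (adj (C ** (C ** B))) = trace (C ** (B ** B))"
    by (simp add: B_def adj_mult matrix_mul_assoc)
  hence c1: "trace (C ** (C ** B)) = 0" using a1 by (simp add: trace_adj)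
  show "trace (C ** (C ** B)) = 0" by (rule c1)
  show c2: "trace (C ** (B ** C)) = 0" using c1 trace_rot3[of C C B] by simp
  show "trace (B ** (C ** C)) = 0" using c2 trace_rot3[of C B C] by simp
  show b1: "trace (C ** (B ** (B ** B))) = 0" using g3 by (simp add: B_def numeral_eq_Suc)
  show b2: "trace (B ** (B ** (B ** C))) = 0" using b1 trace_rot4[of C B B B] by simp
  show b3: "trace (B ** (B ** (C ** B))) = 0" using b2 trace_rot4[of B B B C] by simp
  show "trace (B ** (C ** (B ** B))) = 0" using b3 trace_rot4[of B B C B] by simp
  have "trace (adj (C ** (C ** (C ** B)))) = trace (C ** (B ** (B ** B)))"
    by (simp add: B_def adj_mult matrix_mul_assoc)
  hence d1: "trace (C ** (C ** (C ** B))) = 0" using b1 by (simp add: trace_adj)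
  show "trace (C ** (C ** (C ** B))) = 0" by (rule d1)
  show d2: "trace (C ** (C ** (B ** C))) = 0" using d1 trace_rot4[of C C C B] by simp
  show d3: "trace (C ** (B ** (C ** C))) = 0" using d2 trace_rot4[of C C B C] by simp
  show "trace (B ** (C ** (C ** C))) = 0" using d3 trace_rot4[of C B C C] by simp
qed

lemma Hw_split: "w \<noteq> 0 \<Longrightarrow> Hw C w = (w/2) *m C + (1/(2*w)) *m adj C"
  by (simp add: vec_eq_iff Hw_def)

lemma tau_Hw:
  fixes C :: "complex^'n^'n"
  assumes nil: "mpow C m = 0"
    and g2: "trace (C ** mpow (adj C) 2) = 0" and g3: "trace (C ** mpow (adj C) 3) = 0"
    and w: "w \<noteq> 0"
  shows "tau (Hw C w) 1 = tau (Hw C 1) 1" "tau (Hw C w) 2 = tau (Hw C 1) 2"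
    "tau (Hw C w) 3 = tau (Hw C 1) 3" "tau (Hw C w) 4 = tau (Hw C 1) 4"
proof -
  note z = word_traces[OF nil g2 g3]
  have h1: "Hw C 1 = (1/2) *m C + (1/2) *m adj C" using Hw_split[of 1 C] by simp
  note Fw = F_traces[of "w/2" C "1/(2*w)" "adj C"]
  note F1 = F_traces[of "1/2" C "1/2" "adj C"]
  show "tau (Hw C w) 1 = tau (Hw C 1) 1"
    unfolding tau_def Hw_split[OF w] h1 Fw(1) F1(1) by (simp add: z)
  show "tau (Hw C w) 2 = tau (Hw C 1) 2"
    unfolding tau_def Hw_split[OF w] h1 Fw(2) F1(2) using w by (simp add: z field_simps)
  show "tau (Hw C w) 3 = tau (Hw C 1) 3"
    unfolding tau_def Hw_split[OF w] h1 Fw(3) F1(3) by (simp add: z)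
  show "tau (Hw C w) 4 = tau (Hw C 1) 4"
    unfolding tau_def Hw_split[OF w] h1 Fw(4) F1(4) using w by (simp add: z field_simps)
qed



definition cpP :: "complex^'n^'n \<Rightarrow> complex poly" where
  "cpP X = det (\<chi> i j. [: - X $ i $ j, mat 1 $ i $ j :])"

lemma poly_cpP: "poly (cpP X) mu = det (mu *m mat 1 - X)"
  unfolding cpP_def poly_det by (rule arg_cong[of _ _ det]) (simp add: vec_eq_iff mat_comp)

lemma det_Hw_const:
  fixes C :: "complex^'n^'n"
  assumes card: "CARD('n) \<le> 4" and nil: "mpow C m = 0"
    and g2: "trace (C ** mpow (adj C) 2) = 0" and g3: "trace (C ** mpow (adj C) 3) = 0"
    and w: "w \<noteq> 0"
  shows "det (mu *m mat 1 - Hw C w) = det (mu *m mat 1 - Hw C 1)"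
proof -
  note t = tau_Hw[OF nil g2 g3 w]
  have s: "det (mat 1 - s *m Hw C w) = det (mat 1 - s *m Hw C 1)" for s
    by (rule tau_det_eq[OF card t])
  have nz: "det (v *m mat 1 - Hw C w) = det (v *m mat 1 - Hw C 1)" if v: "v \<noteq> 0" for v
  proof -
    have "v *m mat 1 - X = v *m (mat 1 - (1/v) *m X)" for X :: "complex^'n^'n"
      using v by (simp add: msc_diff)
    thus ?thesis using s[of "1/v"] by (simp add: det_msc)
  qed
  have "cpP (Hw C w) - cpP (Hw C 1) = 0"
  proof (rule poly_zero_on_infinite)
    show "infinite (UNIV - {0::complex})" by (simp add: infinite_UNIV_char_0)
    show "poly (cpP (Hw C w) - cpP (Hw C 1)) v = 0" if "v \<in> UNIV - {0}" for v
      using nz[of v] that by (simp add: poly_cpP)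
  qed
  hence "poly (cpP (Hw C w)) mu = poly (cpP (Hw C 1)) mu" by simp
  thus ?thesis by (simp add: poly_cpP)
qed

definition NPm :: "complex^'n^'n \<Rightarrow> complex \<Rightarrow> complex poly^'n^'n" where
  "NPm C mu = (\<chi> i j. [: -(1/2) * adj C $ i $ j, mu * mat 1 $ i $ j, -(1/2) * C $ i $ j :])"

lemma evm_NPm: "w \<noteq> 0 \<Longrightarrow> evm (NPm C mu) w = w *m (mu *m mat 1 - Hw C w)"
  by (simp add: vec_eq_iff NPm_def Hw_def field_simps)

lemma evm_NPm': "evm (\<chi> i j. pderiv (NPm C mu $ i $ j)) w = mu *m mat 1 - w *m C"
  by (simp add: vec_eq_iff NPm_def pderiv_pCons field_simps)

lemma Km_V: "w \<noteq> 0 \<Longrightarrow> (\<i>/2) *m ((1 / w) *m adj C - w *m C) = \<i> *m ((mu *m mat 1 - w *m C) - (mu *m mat 1 - Hw C w))"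
  by (simp add: vec_eq_iff Hw_def field_simps)

lemma T1_zero:
  fixes C :: "complex^'n^'n"
  assumes card: "CARD('n) \<le> 4" and nil: "mpow C m = 0"
    and g2: "trace (C ** mpow (adj C) 2) = 0" and g3: "trace (C ** mpow (adj C) 3) = 0"
    and hdef: "T1_defined C t mu"
  shows "T1 C t mu = 0"
proof -
  define v where "v = exp (- \<i> * of_real t)"
  have v0: "v \<noteq> 0" by (simp add: v_def)
  let ?N = "mu *m mat 1 - Hw C v"
  let ?V = "mu *m mat 1 - v *m C"
  have inv: "invertible ?N" using hdef unfolding T1_defined_def Hm_eq v_def .
  define d where "d = det (mu *m mat 1 - Hw C 1)"
  define P where "P = det (NPm C mu)"
  have Pw: "poly P w = w ^ CARD('n) * d" if "w \<noteq> 0" for w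
    using that det_Hw_const[OF card nil g2 g3 that, of mu]
    by (simp add: P_def poly_det evm_NPm det_msc d_def)
  have "P - monom d CARD('n) = 0"
  proof (rule poly_zero_on_infinite)
    show "infinite (UNIV - {0::complex})" by (simp add: infinite_UNIV_char_0)
    show "poly (P - monom d CARD('n)) w = 0" if "w \<in> UNIV - {0}" for w
      using Pw[of w] that by (simp add: poly_monom mult.commute)
  qed
  hence Pm: "P = monom d CARD('n)" by simp
  have n1: "0 < CARD('n)" by simp
  have pd: "pderiv P = monom (of_nat CARD('n) * d) (CARD('n) - 1)"
    unfolding Pm by (rule pderiv_monom)
  have vv: "v * v ^ (CARD('n) - 1) = v ^ CARD('n)"
  proof -
    have "v * v ^ (CARD('n) - 1) = v ^ Suc (CARD('n) - 1)" by (simp only: power_Suc)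
    also have "Suc (CARD('n) - 1) = CARD('n)" using n1 by simp
    finally show ?thesis .
  qed
  have "v * poly (pderiv P) v = of_nat CARD('n) * poly P v"
  proof -
    have "v * poly (pderiv P) v = of_nat CARD('n) * d * (v * v ^ (CARD('n) - 1))"
      unfolding pd poly_monom by (simp only: mult_ac)
    also have "\<dots> = of_nat CARD('n) * (d * v ^ CARD('n))" unfolding vv by (simp only: mult_ac)
    also have "d * v ^ CARD('n) = poly P v" unfolding Pm poly_monom ..
    finally show ?thesis .
  qed
  moreover have "v * poly (pderiv P) v = poly P v * trace (matrix_inv ?N ** ?V)"
    unfolding P_def evm_NPm'[symmetric] by (rule jac_logderiv[OF v0 evm_NPm[OF v0] inv])
  moreover have "poly P v \<noteq> 0"
  proof -
    have "poly P v = v ^ CARD('n) * det ?N" by (simp add: P_def poly_det evm_NPm[OF v0] det_msc)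
    moreover have "det ?N \<noteq> 0" using inv by (simp add: invertible_det_nz)
    ultimately show ?thesis using v0 by simp
  qed
  ultimately have trV: "trace (matrix_inv ?N ** ?V) = of_nat CARD('n)" by (simp add: mult.commute)
  have trN: "trace (matrix_inv ?N ** ?N) = of_nat CARD('n)"
    by (simp add: invertible_inv(2)[OF inv] trace_I)
  have "T1 C t mu = trace (matrix_inv ?N ** (\<i> *m (?V - ?N)))"
    unfolding T1_def Hm_eq Km_eq v_def[symmetric] Km_V[OF v0, of _ mu] ..
  also have "\<dots> = \<i> * (trace (matrix_inv ?N ** ?V) - trace (matrix_inv ?N ** ?N))"
    by (simp add: matrix_diff_ldistrib trace_sub)
  also have "\<dots> = 0" unfolding trV trN by simp
  finally show ?thesis .
qed

theorem mainTheorem10: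
  fixes C :: "complex^'n^'n"
  assumes "CARD('n) \<le> 4"
    and "nilpotent_mat C"
    and "contraction C"
    and "\<forall>t lam. T2_defined C t lam \<longrightarrow> T2 C t lam = 0"
  shows "\<forall>t \<mu>. T1_defined C t \<mu> \<longrightarrow> T1 C t \<mu> = 0"
proof (intro allI impI)
  fix t \<mu> assume d: "T1_defined C t \<mu>"
  obtain m where nil: "mpow C m = 0" using assms(2) unfolding nilpotent_mat_def by blast
  note g = gamma_zero[OF assms(4) nil]
  show "T1 C t \<mu> = 0" by (rule T1_zero[OF assms(1) nil g d])
qed


end
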